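(* Let $k\geq1$ and let $c_0,\dots,c_{k-1}$ be non-negative integers with $c_0\geq1$. Let $P(z)=z^k-\sum_{i=0}^{k-1}c_iz^i$, let $\eta_1,\dots,\eta_k$ be its complex roots listed with multiplicity, let $\varphi$ be its unique positive real root, let $g=\gcd(\{i:c_i\neq0\}\cup\{k\})$, and (when $k>g$) let $\psi$ be a root of largest absolute value among the roots with $|\eta|<\varphi$. Then for every positive integer $N$: (i) if $g\nmid N$, then $|\eta_1^N+\dots+\eta_k^N|\leq (k-g)|\psi|^N$; (ii) if $g\mid N$, then $|g\varphi^N-(\eta_1^N+\dots+\eta_k^N)|\leq (k-g)|\psi|^N$. (When $k=g$ the right-hand sides are to be read as $0$.) *)

theory Defs
  imports "HOL-Analysis.Analysis" "HOL-Computational_Algebra.Polynomial"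
begin

definition char_poly :: "nat \<Rightarrow> (nat \<Rightarrow> nat) \<Rightarrow> complex poly" where
  "char_poly k c = monom 1 k - (\<Sum>i<k. monom (of_nat (c i)) i)"

definition char_gcd :: "nat \<Rightarrow> (nat \<Rightarrow> nat) \<Rightarrow> nat" where
  "char_gcd k c = Gcd ({i. i < k \<and> c i \<noteq> 0} \<union> {k})"

end

theory Submission
  imports Defs
begin
lemma my_pderiv_sum: "pderiv (sum f A) = (\<Sum>x\<in>A. pderiv (f x))"
  using higher_pderiv_sum[of 1 f A] by simp

lemma poly_char: "poly (char_poly k c) z = z^k - (\<Sum>i<k. of_nat (c i) * z^i)"
  by (simp add: char_poly_def poly_monom poly_sum)

lemma pderiv_char:
  assumes "k \<ge> 1"
  shows "z * poly (pderiv (char_poly k c)) z = of_nat k * z^k - (\<Sum>i<k. of_nat (i * c i) * z^i)"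
proof -
  have pd: "poly (pderiv (char_poly k c)) z = of_nat k * z^(k-1) - (\<Sum>i<k. of_nat i * of_nat (c i) * z^(i-1))"
    by (simp add: char_poly_def pderiv_diff my_pderiv_sum pderiv_monom poly_monom poly_sum)
  hence "z * poly (pderiv (char_poly k c)) z = of_nat k * (z * z^(k-1)) - (\<Sum>i<k. of_nat i * of_nat (c i) * (z * z^(i-1)))"
    by (subst pd) (simp add: right_diff_distrib sum_distrib_left mult.assoc mult.left_commute)
  also have "z * z^(k-1) = z^k" using assms by (cases k) auto
  also have "(\<Sum>i<k. of_nat i * of_nat (c i) * (z * z^(i-1))) = (\<Sum>i<k. of_nat (i * c i) * z^i)"
    apply (rule sum.cong[OF refl])
    subgoal for i by (cases i) (auto simp: algebra_simps)
    done
  finally show ?thesis .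
qed

lemma root_bound:
  fixes \<phi> r :: real and c :: "nat \<Rightarrow> nat"
  assumes "k \<ge> 1" "c 0 \<ge> 1" "\<phi> > 0" "\<phi>^k = (\<Sum>i<k. c i * \<phi>^i)" "r > \<phi>"
  shows "(\<Sum>i<k. c i * r^i) < r^k"
proof -
  have "(\<Sum>i<k. c i * r^i * \<phi>^k) < (\<Sum>i<k. c i * \<phi>^i * r^k)"
  proof (rule sum_strict_mono_ex1)
    show "\<forall>i\<in>{..<k}. c i * r^i * \<phi>^k \<le> c i * \<phi>^i * r^k"
    proof
      fix i assume "i \<in> {..<k}"
      hence e: "\<phi>^k = \<phi>^i * \<phi>^(k-i)" "r^k = r^i * r^(k-i)" by (simp_all add: power_add[symmetric])
      have "c i * (r^i * \<phi>^i) * \<phi>^(k-i) \<le> c i * (r^i * \<phi>^i) * r^(k-i)" 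
        using assms by (intro mult_left_mono power_mono) (auto intro!: mult_nonneg_nonneg)
      thus "c i * r^i * \<phi>^k \<le> c i * \<phi>^i * r^k" unfolding e by (simp add: mult_ac)
    qed
    have "\<phi>^k < r^k" using assms by (intro power_strict_mono) auto
    hence "c 0 * r^0 * \<phi>^k < c 0 * \<phi>^0 * r^k" using assms by simp
    thus "\<exists>a\<in>{..<k}. c a * r^a * \<phi>^k < c a * \<phi>^a * r^k" by (intro bexI[where x=0]) (use assms in auto)
  qed simp
  also have "\<dots> = \<phi>^k * r^k" by (simp add: assms(4) sum_distrib_right)
  finally have "(\<Sum>i<k. c i * r^i) * \<phi>^k < r^k * \<phi>^k" by (simp add: sum_distrib_right sum_distrib_left mult_ac)
  thus ?thesis using assms(3) by simp
qed

lemma gcd_pow_one: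
  fixes z :: "'a::comm_ring_1"
  assumes "z^a = 1" "z^b = 1" shows "z^(gcd a b) = 1"
proof (cases "a = 0")
  case True thus ?thesis using assms by simp
next
  case False
  then obtain x y where e: "a * x = b * y + gcd a b" using bezout_nat by blast
  have "1 = (z^a)^x" using assms by simp
  also have "\<dots> = (z^b)^y * z^(gcd a b)" by (simp add: power_mult[symmetric] e power_add)
  finally show ?thesis using assms by simp
qed

lemma Gcd_pow_one:
  fixes z :: "'a::comm_ring_1"
  assumes "finite A" "\<forall>a\<in>A. z^a = 1" shows "z^(Gcd A) = 1"
  using assms by (induction A rule: finite_induct) (auto intro: gcd_pow_one)

lemma re_eq_cmod: "Re z = cmod z \<Longrightarrow> z = complex_of_real (cmod z)"
proof -
  assume h: "Re z = cmod z"
  have "cmod z ^ 2 = Re z ^ 2 + Im z ^ 2" by (rule cmod_power2)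
  hence "Im z = 0" using h by simp
  thus ?thesis using h by (simp add: complex_eq_iff)
qed


lemma eq_case:
  fixes \<eta> :: complex and \<phi> :: real and c :: "nat \<Rightarrow> nat"
  assumes "\<phi> > 0" "cmod \<eta> = \<phi>" "\<eta>^k = (\<Sum>i<k. of_nat (c i) * \<eta>^i)"
    "\<phi>^k = (\<Sum>i<k. c i * \<phi>^i)" "i < k" "c i \<noteq> 0"
  shows "\<eta>^i * of_real (\<phi>^k) = \<eta>^k * of_real (\<phi>^i)"
proof -
  define w where "w = \<eta>^k"
  have nw: "cmod w = \<phi>^k" unfolding w_def norm_power assms(2) by simp
  define t where "t j = Re (of_nat (c j) * \<eta>^j * cnj w)" for j
  define b where "b j = c j * \<phi>^j * \<phi>^k" for j
  have "(\<Sum>j<k. t j) = Re ((\<Sum>j<k. of_nat (c j) * \<eta>^j) * cnj w)"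
    by (simp add: t_def sum_distrib_right Re_sum)
  also have "\<dots> = Re (w * cnj w)" using assms by (simp add: w_def)
  also have "\<dots> = \<phi>^k * \<phi>^k" using nw
    by (metis Re_complex_of_real complex_norm_square power2_eq_square)
  also have "\<dots> = (\<Sum>j<k. b j)" by (simp add: b_def assms(4) sum_distrib_right)
  finally have tb: "(\<Sum>j<k. t j) = (\<Sum>j<k. b j)" .
  have le: "t j \<le> b j" for j
  proof -
    have "t j \<le> cmod (of_nat (c j) * \<eta>^j * cnj w)" unfolding t_def by (rule complex_Re_le_cmod)
    also have "\<dots> = b j" using assms nw by (simp add: b_def norm_mult norm_power)
    finally show ?thesis .
  qed
  have "t i = b i"
  proof (rule ccontr)
    assume "t i \<noteq> b i"
    hence "t i < b i" using le[of i] by simp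
    hence "(\<Sum>j<k. t j) < (\<Sum>j<k. b j)"
      using assms(5) le by (intro sum_strict_mono_ex1) auto
    thus False using tb by simp
  qed
  define u where "u = \<eta>^i * cnj w"
  have "real (c i) * Re u = real (c i) * cmod u"
    using \<open>t i = b i\<close> assms nw by (simp add: t_def b_def u_def norm_mult norm_power mult.assoc)
  hence "Re u = cmod u" using assms(6) by simp
  hence "u = of_real (cmod u)" by (rule re_eq_cmod)
  also have "cmod u = \<phi>^i * \<phi>^k" using assms nw by (simp add: u_def norm_mult norm_power)
  finally have e1: "u = of_real (\<phi>^i * \<phi>^k)" .
  have e2: "u * w = \<eta>^i * of_real (\<phi>^k * \<phi>^k)" unfolding u_def using nw
    by (metis complex_norm_square mult.assoc mult.commute power2_eq_square of_real_mult)
  have "\<eta>^i * of_real (\<phi>^k) * of_real (\<phi>^k) = u * w" by (simp add: e2 mult.assoc)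
  also have "\<dots> = of_real (\<phi>^i * \<phi>^k) * w" by (simp only: e1)
  also have "\<dots> = \<eta>^k * of_real (\<phi>^i) * of_real (\<phi>^k)" by (simp add: w_def mult_ac)
  finally have "\<eta>^i * of_real (\<phi>^k) * of_real (\<phi>^k) = \<eta>^k * of_real (\<phi>^i) * of_real (\<phi>^k)" .
  thus ?thesis using assms(1) by simp
qed



lemma double_root:
  fixes \<eta> :: "nat \<Rightarrow> complex"
  assumes "p = (\<Prod>i<k. [:- \<eta> i, 1:])" "a<k" "b<k" "a\<noteq>b" "\<eta> a = \<eta> b"
  shows "poly (pderiv p) (\<eta> a) = 0"
proof -
  define q where "q = [:- \<eta> a, 1:]"
  define R where "R = (\<Prod>i\<in>{..<k}-{a}-{b}. [:- \<eta> i, 1:])"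
  have "p = [:- \<eta> a, 1:] * (\<Prod>i\<in>{..<k}-{a}. [:- \<eta> i, 1:])"
    using assms by (simp add: prod.remove)
  also have "(\<Prod>i\<in>{..<k}-{a}. [:- \<eta> i, 1:]) = [:- \<eta> b, 1:] * R"
    unfolding R_def using assms by (intro prod.remove) auto
  finally have "p = q * (q * R)" using assms by (simp add: q_def)
  hence "pderiv p = q * (q * pderiv R + R * pderiv q) + (q * R) * pderiv q"
    by (simp add: pderiv_mult)
  moreover have "poly q (\<eta> a) = 0" by (simp add: q_def)
  ultimately show ?thesis by simp
qed

lemma deriv_nonzero:
  fixes \<phi> :: real and \<zeta> :: complex and c :: "nat \<Rightarrow> nat"
  assumes "k \<ge> 1" "c 0 \<ge> 1" "\<phi> > 0" "\<phi>^k = (\<Sum>i<k. c i * \<phi>^i)"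
    "\<forall>i<k. c i \<noteq> 0 \<longrightarrow> \<zeta>^i = 1" "\<zeta>^k = 1"
  shows "poly (pderiv (char_poly k c)) (of_real \<phi> * \<zeta>) \<noteq> 0"
proof
  assume h: "poly (pderiv (char_poly k c)) (of_real \<phi> * \<zeta>) = 0"
  define z where "z = of_real \<phi> * \<zeta>"
  have "0 = z * poly (pderiv (char_poly k c)) z" using h by (simp add: z_def)
  also have "\<dots> = of_nat k * z^k - (\<Sum>i<k. of_nat (i * c i) * z^i)" by (rule pderiv_char[OF assms(1)])
  also have "z^k = of_real (\<phi>^k)" using assms(6) by (simp add: z_def power_mult_distrib)
  also have "(\<Sum>i<k. of_nat (i * c i) * z^i) = (\<Sum>i<k. of_real (real (i * c i) * \<phi>^i))"
  proof (intro sum.cong refl)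
    fix i assume "i \<in> {..<k}"
    thus "of_nat (i * c i) * z^i = of_real (real (i * c i) * \<phi>^i)"
      using assms(5) by (cases "c i = 0") (auto simp: z_def power_mult_distrib)
  qed
  finally have "(0::complex) = of_real (real k * \<phi>^k - (\<Sum>i<k. real (i * c i) * \<phi>^i))"
    by (simp add: of_real_sum)
  hence "real k * \<phi>^k - (\<Sum>i<k. real (i * c i) * \<phi>^i) = 0" by (metis of_real_eq_0_iff)
  hence e: "real k * \<phi>^k = (\<Sum>i<k. real (i * c i) * \<phi>^i)" by linarith
  have "(\<Sum>i<k. real (i * c i) * \<phi>^i) < (\<Sum>i<k. real k * (c i * \<phi>^i))"
  proof (rule sum_strict_mono_ex1)
    show "\<forall>x\<in>{..<k}. real (x * c x) * \<phi> ^ x \<le> real k * (real (c x) * \<phi> ^ x)"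
      using assms(3) by (auto intro!: mult_right_mono simp: mult.assoc[symmetric])
    show "\<exists>a\<in>{..<k}. real (a * c a) * \<phi> ^ a < real k * (real (c a) * \<phi> ^ a)"
      using assms by (intro bexI[where x=0]) auto
  qed simp
  also have "\<dots> = real k * \<phi>^k" by (simp add: assms(4) sum_distrib_left)
  finally show False using e by simp
qed

lemma sum_pow_roots_unity:
  assumes "g > 0"
  shows "(\<Sum>z\<in>{z::complex. z^g = 1}. z^N) = (if g dvd N then of_nat g else 0)"
proof (cases "g dvd N")
  case True
  then obtain m where "N = g * m" by blast
  hence "(\<Sum>z\<in>{z::complex. z^g = 1}. z^N) = (\<Sum>z\<in>{z::complex. z^g = 1}. 1)"
    by (intro sum.cong refl) (simp add: power_mult)
  also have "\<dots> = of_nat g" using card_roots_unity_eq[OF assms] by simp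
  finally show ?thesis using True by simp
next
  case False
  define \<omega> where "\<omega> = cis (2 * pi * real N / real g)"
  have "\<omega> \<noteq> 1"
  proof
    assume "\<omega> = 1"
    hence "cos (2 * pi * real N / real g) = 1" by (simp add: \<omega>_def complex_eq_iff)
    then obtain m :: int where m: "2 * pi * real N / real g = real_of_int m * 2 * pi"
      by (subst (asm) cos_one_2pi_int) blast
    hence "real N = real_of_int m * real g" using assms by (simp add: field_simps)
    hence "int N = m * int g" by (metis of_int_eq_iff of_int_mult of_int_of_nat_eq)
    hence "int g dvd int N" by simp
    thus False using False by simp
  qed
  have "(\<Sum>z\<in>{z::complex. z^g = 1}. z^N) = (\<Sum>j<g. cis (2 * pi * real j / real g) ^ N)"
    by (rule sum.reindex_bij_betw[OF Complex.bij_betw_roots_unity[OF assms], symmetric])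
  also have "\<dots> = (\<Sum>j<g. \<omega> ^ j)"
  proof (intro sum.cong refl)
    fix j :: nat
    have "cis (2 * pi * real j / real g) ^ N = cis (real N * (2 * pi * real j / real g))" by (rule Complex.DeMoivre)
    also have "\<dots> = cis (real j * (2 * pi * real N / real g))" by (simp add: field_simps)
    also have "\<dots> = \<omega> ^ j" unfolding \<omega>_def by (rule Complex.DeMoivre[symmetric])
    finally show "cis (2 * pi * real j / real g) ^ N = \<omega> ^ j" .
  qed
  also have "\<dots> = (\<omega> ^ g - 1) / (\<omega> - 1)"
    using \<open>\<omega> \<noteq> 1\<close> by (subst geometric_sum) auto
  also have "\<omega> ^ g = cis (2 * pi * real N)" using assms by (simp add: \<omega>_def Complex.DeMoivre)
  also have "\<dots> = 1" by (simp add: complex_eq_iff)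
  finally show ?thesis using False by simp
qed



theorem mainTheorem12:
  fixes k N :: nat and c :: "nat \<Rightarrow> nat" and \<eta> :: "nat \<Rightarrow> complex"
    and \<phi> :: real and \<psi> :: complex
  assumes "k \<ge> 1" and "c 0 \<ge> 1"
    and roots: "char_poly k c = (\<Prod>i<k. [:- \<eta> i, 1:])"
    and phi_pos: "\<phi> > 0" and phi_root: "poly (char_poly k c) (complex_of_real \<phi>) = 0"
    and psi: "k > char_gcd k c \<Longrightarrow>
        (\<exists>i<k. \<psi> = \<eta> i) \<and> norm \<psi> < \<phi> \<and>
        (\<forall>i<k. norm (\<eta> i) < \<phi> \<longrightarrow> norm (\<eta> i) \<le> norm \<psi>)"
    and "N > 0"
  shows "(\<not> char_gcd k c dvd N \<longrightarrow>
            norm (\<Sum>i<k. \<eta> i ^ N) \<le> real (k - char_gcd k c) * norm \<psi> ^ N) \<and>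
         (char_gcd k c dvd N \<longrightarrow>
            norm (of_nat (char_gcd k c) * complex_of_real (\<phi> ^ N) - (\<Sum>i<k. \<eta> i ^ N))
              \<le> real (k - char_gcd k c) * norm \<psi> ^ N)"
proof -
  define g where "g = char_gcd k c"
  define S where "S = {i. i < k \<and> c i \<noteq> 0} \<union> {k}"
  have finS: "finite S" by (simp add: S_def)
  have g_S: "g = Gcd S" by (simp add: g_def char_gcd_def S_def)
  have gdvd: "g dvd j" if "j \<in> S" for j using that g_S by simp
  have "g dvd k" using gdvd by (simp add: S_def)
  hence gpos: "g > 0" using assms(1) by (cases g) auto
  have gk: "g \<le> k" using \<open>g dvd k\<close> assms(1) by (simp add: dvd_imp_le)
  have "complex_of_real (\<phi>^k - (\<Sum>i<k. real (c i) * \<phi>^i)) = 0"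
    using phi_root by (simp add: poly_char of_real_sum)
  hence phi_eq: "\<phi>^k = (\<Sum>i<k. real (c i) * \<phi>^i)" by (metis of_real_eq_0_iff right_minus_eq)
  have root_iff: "poly (char_poly k c) z = 0 \<longleftrightarrow> (\<exists>i<k. \<eta> i = z)" for z
    by (auto simp: roots poly_prod)
  have eta_eq: "\<eta> i ^ k = (\<Sum>j<k. of_nat (c j) * \<eta> i ^ j)" if "i < k" for i
    using root_iff[of "\<eta> i"] that by (auto simp: poly_char)
  have bound: "cmod (\<eta> i) \<le> \<phi>" if "i < k" for i
  proof (rule ccontr)
    assume "\<not> cmod (\<eta> i) \<le> \<phi>"
    hence r: "cmod (\<eta> i) > \<phi>" by simp
    have "cmod (\<eta> i) ^ k = cmod (\<Sum>j<k. of_nat (c j) * \<eta> i ^ j)"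
      by (subst eta_eq[OF that, symmetric]) (simp add: norm_power)
    also have "\<dots> \<le> (\<Sum>j<k. cmod (of_nat (c j) * \<eta> i ^ j))" by (rule norm_sum)
    also have "\<dots> = (\<Sum>j<k. real (c j) * cmod (\<eta> i) ^ j)" by (simp add: norm_mult norm_power)
    also have "\<dots> < cmod (\<eta> i) ^ k" by (rule root_bound[OF assms(1,2) phi_pos phi_eq r])
    finally show False by simp
  qed
  have zeta_pow: "(\<eta> i / of_real \<phi>) ^ j = (\<eta> i / of_real \<phi>) ^ k"
    if "i < k" "cmod (\<eta> i) = \<phi>" "j < k" "c j \<noteq> 0" for i j
  proof -
    have "\<eta> i ^ j * of_real (\<phi>^k) = \<eta> i ^ k * of_real (\<phi>^j)"
      by (rule eq_case[OF phi_pos that(2) eta_eq[OF that(1)] phi_eq that(3,4)])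
    thus ?thesis using phi_pos by (simp add: power_divide field_simps)
  qed
  have zeta_unit: "(\<eta> i / of_real \<phi>) ^ g = 1" if "i < k" "cmod (\<eta> i) = \<phi>" for i
  proof -
    have k1: "(\<eta> i / of_real \<phi>) ^ k = 1"
      using zeta_pow[OF that, of 0] assms(1,2) by simp
    have "\<forall>a\<in>S. (\<eta> i / of_real \<phi>) ^ a = 1"
      using zeta_pow[OF that] k1 by (auto simp: S_def)
    thus ?thesis unfolding g_S by (rule Gcd_pow_one[OF finS])
  qed
  have unitS: "\<zeta> ^ j = 1" if u1: "\<zeta> ^ g = 1" and u2: "j \<in> S" for \<zeta> :: complex and j
  proof -
    obtain m where "j = g * m" using gdvd[OF u2] by blast
    thus ?thesis using u1 by (simp add: power_mult)
  qed
  have Z_root: "poly (char_poly k c) (of_real \<phi> * \<zeta>) = 0" if z1: "\<zeta> ^ g = 1" for \<zeta>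
  proof -
    have "(of_real \<phi> * \<zeta>) ^ k = of_real (\<phi>^k)"
      using unitS[OF z1, of k] by (simp add: S_def power_mult_distrib)
    moreover have "(\<Sum>j<k. of_nat (c j) * (of_real \<phi> * \<zeta>) ^ j) = (\<Sum>j<k. of_real (real (c j) * \<phi>^j))"
    proof (intro sum.cong refl)
      fix j assume "j \<in> {..<k}"
      thus "of_nat (c j) * (of_real \<phi> * \<zeta>) ^ j = of_real (real (c j) * \<phi>^j)"
        using unitS[OF z1, of j] by (cases "c j = 0") (auto simp: S_def power_mult_distrib)
    qed
    ultimately show ?thesis by (simp add: poly_char phi_eq of_real_sum)
  qed
  have Z_deriv: "poly (pderiv (char_poly k c)) (of_real \<phi> * \<zeta>) \<noteq> 0" if "\<zeta> ^ g = 1" for \<zeta>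
    using unitS[OF that] by (intro deriv_nonzero[OF assms(1,2) phi_pos phi_eq]) (auto simp: S_def)
  define I where "I = {i. i < k \<and> cmod (\<eta> i) = \<phi>}"
  define Z where "Z = {z::complex. z ^ g = 1}"
  define h where "h i = \<eta> i / of_real \<phi>" for i
  have eta_h: "\<eta> i = of_real \<phi> * h i" for i using phi_pos by (simp add: h_def)
  have bij: "bij_betw h I Z"
    unfolding bij_betw_def
  proof (intro conjI)
    show "inj_on h I"
    proof (rule inj_onI)
      fix a b assume ab: "a \<in> I" "b \<in> I" "h a = h b"
      hence e: "\<eta> a = \<eta> b" using eta_h by metis
      show "a = b"
      proof (rule ccontr)
        assume "a \<noteq> b"
        hence "poly (pderiv (char_poly k c)) (\<eta> a) = 0"
          using ab e by (intro double_root[OF roots]) (auto simp: I_def)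
        moreover have "h a ^ g = 1" using ab zeta_unit by (auto simp: I_def h_def)
        ultimately show False using Z_deriv eta_h by metis
      qed
    qed
    show "h ` I = Z"
    proof
      show "h ` I \<subseteq> Z" using zeta_unit by (auto simp: I_def Z_def h_def)
      show "Z \<subseteq> h ` I"
      proof
        fix \<zeta> assume "\<zeta> \<in> Z"
        hence z: "\<zeta> ^ g = 1" by (simp add: Z_def)
        then obtain i where i: "i < k" "\<eta> i = of_real \<phi> * \<zeta>"
          using Z_root root_iff by metis
        have "cmod \<zeta> = 1" using power_eq_1_iff[OF z] gpos by auto
        hence "cmod (\<eta> i) = \<phi>" using i phi_pos by (simp add: norm_mult)
        moreover have "h i = \<zeta>" using i phi_pos by (simp add: h_def)
        ultimately show "\<zeta> \<in> h ` I" using i by (auto simp: I_def)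
      qed
    qed
  qed
  have cardI: "card I = g"
    using bij_betw_same_card[OF bij] card_roots_unity_eq[OF gpos] by (simp add: Z_def)
  have IsubK: "I \<subseteq> {..<k}" by (auto simp: I_def)
  define R where "R = {..<k} - I"
  have cardR: "card R = k - g" using cardI IsubK by (simp add: R_def card_Diff_subset finite_subset)
  have sumI: "(\<Sum>i\<in>I. \<eta> i ^ N) = of_real (\<phi>^N) * (if g dvd N then of_nat g else 0)"
  proof -
    have "(\<Sum>i\<in>I. \<eta> i ^ N) = of_real (\<phi>^N) * (\<Sum>i\<in>I. h i ^ N)"
      by (simp add: eta_h power_mult_distrib sum_distrib_left)
    also have "(\<Sum>i\<in>I. h i ^ N) = (\<Sum>z\<in>Z. z ^ N)"
      by (rule sum.reindex_bij_betw[OF bij])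
    also have "\<dots> = (if g dvd N then of_nat g else 0)"
      unfolding Z_def by (rule sum_pow_roots_unity[OF gpos])
    finally show ?thesis .
  qed
  have split: "(\<Sum>i<k. \<eta> i ^ N) = (\<Sum>i\<in>R. \<eta> i ^ N) + (\<Sum>i\<in>I. \<eta> i ^ N)"
    unfolding R_def by (rule sum.subset_diff[OF IsubK]) simp
  have Rbound: "norm (\<Sum>i\<in>R. \<eta> i ^ N) \<le> real (k - g) * norm \<psi> ^ N"
  proof -
    have "norm (\<Sum>i\<in>R. \<eta> i ^ N) \<le> (\<Sum>i\<in>R. cmod (\<eta> i) ^ N)"
      by (rule order_trans[OF norm_sum]) (simp add: norm_power)
    also have "\<dots> \<le> of_nat (card R) * norm \<psi> ^ N"
    proof (rule sum_bounded_above)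
      fix i assume iR: "i \<in> R"
      hence "R \<noteq> {}" by auto
      hence "card R > 0" by (simp add: R_def card_gt_0_iff)
      hence "k > g" using cardR by simp
      hence P: "\<forall>i<k. norm (\<eta> i) < \<phi> \<longrightarrow> norm (\<eta> i) \<le> norm \<psi>" using psi g_def by blast
      have "i < k" "cmod (\<eta> i) \<noteq> \<phi>" using iR by (auto simp: R_def I_def)
      hence "cmod (\<eta> i) < \<phi>" using bound[of i] by simp
      hence "cmod (\<eta> i) \<le> cmod \<psi>" using P \<open>i < k\<close> by blast
      thus "cmod (\<eta> i) ^ N \<le> norm \<psi> ^ N" by (intro power_mono) auto
    qed
    finally show ?thesis using cardR by simp
  qed
  show ?thesis
  proof (intro conjI impI)
    assume "\<not> char_gcd k c dvd N"
    hence "(\<Sum>i<k. \<eta> i ^ N) = (\<Sum>i\<in>R. \<eta> i ^ N)" using split sumI by (simp add: g_def)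
    thus "norm (\<Sum>i<k. \<eta> i ^ N) \<le> real (k - char_gcd k c) * norm \<psi> ^ N"
      using Rbound by (simp add: g_def)
  next
    assume "char_gcd k c dvd N"
    hence "of_nat (char_gcd k c) * complex_of_real (\<phi> ^ N) - (\<Sum>i<k. \<eta> i ^ N) = - (\<Sum>i\<in>R. \<eta> i ^ N)"
      using split sumI by (simp add: g_def)
    thus "norm (of_nat (char_gcd k c) * complex_of_real (\<phi> ^ N) - (\<Sum>i<k. \<eta> i ^ N))
              \<le> real (k - char_gcd k c) * norm \<psi> ^ N"
      using Rbound by (simp add: g_def)
  qed
qed

end
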